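(* Let $H\in(0,1)$, $\alpha\in(0,1]$, $d\ge1$ an integer, $T>0$, and let $I\subset(0,T]$ and $J\subset[0,2\pi)$ be two fixed non-trivial compact intervals. Let $\mathbf{\Delta}((t,x);(s,y)):=|x-y|^{2\alpha}+|t-s|^{\alpha\wedge(2H)}$. Then for all $N>0$ there exists a finite positive constant $C=C(I,J,N)$ such that for all $a\in[0,N]$, $$\int_Idt\int_Ids\int_Jdx\int_Jdy\ \frac{e^{-a^2/\mathbf{\Delta}((t,x);(s,y))}}{\mathbf{\Delta}((t,x);(s,y))^{d/2}}\le C\,\mathrm{K}_{d-(\frac1\alpha+\frac{2}{\alpha\wedge(2H)})}(a).$$
   Context: For $\gamma\in\mathbb{R}$ and $r>0$, $\mathrm{K}_\gamma(r)=r^{-\gamma}$ if $\gamma>0$, $\mathrm{K}_\gamma(r)=\log(N_0/r)$ if $\gamma=0$, and $\mathrm{K}_\gamma(r)=1$ if $\gamma<0$, where $N_0$ is a constant taken sufficiently large. *)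

theory Defs
  imports "HOL-Analysis.Analysis"
begin

text \<open>The kernel K_gamma(r) with the large constant N0, valued in [0,infinity];
  K_gamma(0) = infinity when gamma \<ge> 0 (r^(-gamma) resp. log(N0/r) blow up at 0).\<close>
definition Kker :: "real \<Rightarrow> real \<Rightarrow> real \<Rightarrow> ennreal" where
  "Kker N0 \<gamma> r =
     (if \<gamma> > 0 then (if r = 0 then \<infinity> else ennreal (r powr (-\<gamma>)))
      else if \<gamma> = 0 then (if r = 0 then \<infinity> else ennreal (ln (N0 / r)))
      else 1)"

definition Delta :: "real \<Rightarrow> real \<Rightarrow> real \<Rightarrow> real \<Rightarrow> real \<Rightarrow> real \<Rightarrow> real" where
  "Delta H \<alpha> t x s y = \<bar>x - y\<bar> powr (2 * \<alpha>) + \<bar>t - s\<bar> powr (min \<alpha> (2 * H))"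

end

theory Submission
  imports Defs
begin

lemma expbound:
  fixes z p :: real and n :: nat
  assumes "0 \<le> z" "0 < p" "p \<le> real n"
  shows "exp (-z) * z powr p \<le> real n ^ n + 1"
proof (cases "z \<le> 1")
  case True
  have "z powr p \<le> 1 powr p" using True assms by (intro powr_mono2) auto
  then have "z powr p \<le> 1" by simp
  moreover have "exp (-z) \<le> 1" using assms by simp
  ultimately have "exp (-z) * z powr p \<le> 1"
    by (metis mult_le_one exp_ge_zero powr_ge_zero)
  then show ?thesis by (smt (verit) zero_le_power of_nat_0_le_iff)
next
  case False
  then have n1: "n \<ge> 1" using assms by (cases n) auto
  have "z powr p \<le> z powr real n" using False assms by (intro powr_mono) auto
  also have "\<dots> = z ^ n" using False by (simp add: powr_realpow)
  also have "\<dots> = real n ^ n * (z / real n) ^ n" using n1 by (simp add: power_divide)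
  also have "\<dots> \<le> real n ^ n * exp (z / real n) ^ n"
  proof -
    have "z / real n \<le> exp (z / real n)" using exp_ge_add_one_self[of "z / real n"] by linarith
    then show ?thesis using False n1 by (intro mult_left_mono power_mono) auto
  qed
  also have "exp (z / real n) ^ n = exp z" using n1 by (simp flip: exp_of_nat_mult)
  finally have "z powr p \<le> real n ^ n * exp z" .
  then have "exp (-z) * z powr p \<le> exp (-z) * (real n ^ n * exp z)" by (simp)
  also have "\<dots> = real n ^ n" by (simp add: exp_minus field_simps)
  finally show ?thesis by simp
qed

definition Fn :: "real \<Rightarrow> real \<Rightarrow> real \<Rightarrow> real \<Rightarrow> real \<Rightarrow> real \<Rightarrow> real" where
  "Fn \<alpha> \<beta> p a v u = exp (-(a\<^sup>2) / (u powr (2*\<alpha>) + v powr \<beta>)) / (u powr (2*\<alpha>) + v powr \<beta>) powr p"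

lemma Fn_nonneg: "0 \<le> Fn \<alpha> \<beta> p a v u"
  unfolding Fn_def by simp

lemma P0: assumes "0 < p"
  shows "Fn \<alpha> \<beta> p a v u \<le> (u powr (2*\<alpha>) + v powr \<beta>) powr (-p)"
proof -
  let ?D = "u powr (2*\<alpha>) + v powr \<beta>"
  have "exp (-(a\<^sup>2) / ?D) \<le> 1" by (simp add: divide_nonneg_nonneg)
  then have "Fn \<alpha> \<beta> p a v u \<le> 1 / ?D powr p"
    unfolding Fn_def by (intro divide_right_mono) auto
  then show ?thesis by (simp add: powr_minus_divide)
qed

lemma P1: assumes "0 < p" "p \<le> real n" "0 < a"
  shows "Fn \<alpha> \<beta> p a v u \<le> (real n ^ n + 1) * a powr (-2*p)"
proof -
  define D where "D = u powr (2*\<alpha>) + v powr \<beta>"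
  have D0: "D \<ge> 0" unfolding D_def by simp
  show ?thesis
  proof (cases "D = 0")
    case True
    then show ?thesis unfolding Fn_def D_def[symmetric] by simp
  next
    case False
    then have Dp: "D > 0" using D0 by simp
    define z where "z = a\<^sup>2 / D"
    have zp: "z > 0" using Dp assms unfolding z_def by simp
    have DD: "D = a\<^sup>2 / z" using Dp zp assms unfolding z_def by simp
    have "Fn \<alpha> \<beta> p a v u = exp (-z) * D powr (-p)"
      unfolding Fn_def D_def[symmetric] z_def by (simp add: powr_minus_divide)
    also have "D powr (-p) = a powr (-2*p) * z powr p"
    proof -
      have "D powr (-p) = (a\<^sup>2) powr (-p) / z powr (-p)"
        unfolding DD by (rule powr_divide)
      also have "(a\<^sup>2) powr (-p) = a powr (-2*p)"
      proof -
        have "a\<^sup>2 = a powr 2" using assms by (simp add: powr_realpow)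
        then show ?thesis by (simp add: powr_powr)
      qed
      also have "a powr (-2*p) / z powr (-p) = a powr (-2*p) * z powr p"
        by (simp add: powr_minus divide_inverse)
      finally show ?thesis .
    qed
    finally have "Fn \<alpha> \<beta> p a v u = a powr (-2*p) * (exp (-z) * z powr p)" by simp
    also have "\<dots> \<le> a powr (-2*p) * (real n ^ n + 1)"
      by (intro mult_left_mono expbound) (use zp assms in auto)
    finally show ?thesis by (simp add: mult.commute)
  qed
qed

lemma P2: assumes "0 < p" "0 < u" "0 < \<alpha>"
  shows "Fn \<alpha> \<beta> p a v u \<le> u powr (-(2*\<alpha>*p))"
proof -
  have "Fn \<alpha> \<beta> p a v u \<le> (u powr (2*\<alpha>) + v powr \<beta>) powr (-p)" by (rule P0) fact
  also have "\<dots> \<le> (u powr (2*\<alpha>)) powr (-p)"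
    by (rule powr_mono2') (use assms in auto)
  also have "\<dots> = u powr (-(2*\<alpha>*p))" by (simp add: powr_powr)
  finally show ?thesis .
qed

lemma P3: assumes "0 < p" "0 < v" "0 < \<beta>"
  shows "Fn \<alpha> \<beta> p a v u \<le> v powr (-(\<beta>*p))"
proof -
  have "Fn \<alpha> \<beta> p a v u \<le> (u powr (2*\<alpha>) + v powr \<beta>) powr (-p)" by (rule P0) fact
  also have "\<dots> \<le> (v powr \<beta>) powr (-p)"
    by (rule powr_mono2') (use assms in auto)
  also have "\<dots> = v powr (-(\<beta>*p))" by (simp add: powr_powr)
  finally show ?thesis .
qed

lemma P4: assumes "0 < p" "0 < u" "0 < v" "0 \<le> \<theta>" "\<theta> \<le> 1" "0<\<alpha>" "0<\<beta>"
  shows "Fn \<alpha> \<beta> p a v u \<le> u powr (-(2*\<alpha>*\<theta>*p)) * v powr (-(\<beta>*(1-\<theta>)*p))"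
proof -
  define D where "D = u powr (2*\<alpha>) + v powr \<beta>"
  have Dp: "D > 0" unfolding D_def using assms by (simp add: add_pos_nonneg)
  have "Fn \<alpha> \<beta> p a v u \<le> D powr (-p)" unfolding D_def by (rule P0) fact
  also have "\<dots> = D powr (-(\<theta>*p)) * D powr (-((1-\<theta>)*p))"
    by (simp add: powr_add[symmetric] algebra_simps)
  also have "\<dots> \<le> (u powr (2*\<alpha>)) powr (-(\<theta>*p)) * (v powr \<beta>) powr (-((1-\<theta>)*p))"
    by (intro mult_mono powr_mono2') (use assms in \<open>auto simp: D_def\<close>)
  also have "\<dots> = u powr (-(2*\<alpha>*\<theta>*p)) * v powr (-(\<beta>*(1-\<theta>)*p))"
    by (simp add: powr_powr mult.assoc)
  finally show ?thesis .
qed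


lemma ind_conv: "ennreal (indicator A u * f u) = ennreal (f u) * indicator A u"
  by (auto split: split_indicator)

lemma en_lin: "0\<le>K \<Longrightarrow> 0\<le>w \<Longrightarrow> 0\<le>M \<Longrightarrow> 0\<le>X \<Longrightarrow>
  ennreal K * ennreal w + ennreal M * ennreal X = ennreal (K*w + M*X)"
  by (simp add: ennreal_mult)

lemma tail_int:
  assumes "1 < e" "0 < w"
  shows "(\<integral>\<^sup>+u. ennreal (u powr (-e)) * indicator {w..} u \<partial>lborel) = ennreal (w powr (1-e) / (e-1))"
proof -
  have h: "((\<lambda>x. x powr (-e)) has_integral -(w powr (-e+1)) / (-e+1)) {w..}"
    by (rule has_integral_powr_to_inf) (use assms in auto)
  have "(\<integral>\<^sup>+u. ennreal (indicator {w..} u * u powr (-e)) \<partial>lborel) = ennreal (-(w powr (-e+1)) / (-e+1))"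
    by (rule nn_integral_has_integral_lebesgue[OF _ h]) auto
  moreover have "-(w powr (-e+1)) / (-e+1) = w powr (1-e) / (e-1)"
    using assms by (simp add: field_simps)
  moreover have "(\<integral>\<^sup>+u. ennreal (u powr (-e)) * indicator {w..} u \<partial>lborel) = (\<integral>\<^sup>+u. ennreal (indicator {w..} u * u powr (-e)) \<partial>lborel)"
    by (intro nn_integral_cong) (auto split: split_indicator)
  ultimately show ?thesis by simp
qed

lemma fin_int:
  assumes "0 < w" "w \<le> L"
  shows "(\<integral>\<^sup>+u. ennreal (u powr (-1)) * indicator {w..L} u \<partial>lborel) = ennreal (ln L - ln w)"
proof -
  have h: "((\<lambda>x. x powr (-1)) has_integral (ln L - ln w)) {w..L}"
  proof (rule fundamental_theorem_of_calculus)
    show "w \<le> L" by fact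
    fix x assume x: "x \<in> {w..L}"
    then have "x > 0" using assms by auto
    then show "(ln has_vector_derivative x powr (-1)) (at x within {w..L})"
      by (auto intro!: derivative_eq_intros simp: powr_minus_divide
          simp flip: has_real_derivative_iff_has_vector_derivative)
  qed
  have "(\<integral>\<^sup>+u. ennreal (indicator {w..L} u * u powr (-1)) \<partial>lborel) = ennreal (ln L - ln w)"
    by (rule nn_integral_has_integral_lebesgue[OF _ h]) auto
  moreover have "(\<integral>\<^sup>+u. ennreal (u powr (-1)) * indicator {w..L} u \<partial>lborel) = (\<integral>\<^sup>+u. ennreal (indicator {w..L} u * u powr (-1)) \<partial>lborel)"
    by (intro nn_integral_cong) (auto split: split_indicator simp del: powr_neg_one')
  ultimately show ?thesis by (simp del: powr_neg_one')
qed

lemma pow0_int: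
  assumes "0 \<le> e" "e < 1" "0 \<le> L"
  shows "(\<integral>\<^sup>+u\<in>{0..L}. ennreal (u powr (-e)) \<partial>lborel) = ennreal (L powr (1-e) / (1-e))"
proof -
  have h: "((\<lambda>x. x powr (-e)) has_integral (L powr (-e+1) / (-e+1))) {0..L}"
    by (rule has_integral_powr_from_0) (use assms in auto)
  have "(\<integral>\<^sup>+u. ennreal (indicator {0..L} u * u powr (-e)) \<partial>lborel) = ennreal (L powr (-e+1) / (-e+1))"
    by (rule nn_integral_has_integral_lebesgue[OF _ h]) auto
  moreover have "(\<integral>\<^sup>+u\<in>{0..L}. ennreal (u powr (-e)) \<partial>lborel) = (\<integral>\<^sup>+u. ennreal (indicator {0..L} u * u powr (-e)) \<partial>lborel)"
    by (intro nn_integral_cong) (auto split: split_indicator)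
  ultimately show ?thesis by (simp add: add.commute)
qed

lemma LG1:
  fixes K M w e L :: real
  assumes "0 \<le> K" "0 \<le> M" "0 < w" "1 < e"
  shows "(\<integral>\<^sup>+u\<in>{0..L}. ennreal (if u \<le> w then K else M * u powr (-e)) \<partial>lborel)
          \<le> ennreal (K*w + M * (w powr (1-e) / (e-1)))"
proof -
  have "(\<integral>\<^sup>+u\<in>{0..L}. ennreal (if u \<le> w then K else M * u powr (-e)) \<partial>lborel)
     \<le> (\<integral>\<^sup>+u. ennreal K * indicator {0..w} u + ennreal M * (ennreal (u powr (-e)) * indicator {w..} u) \<partial>lborel)"
  proof (intro nn_integral_mono)
    fix u
    show "ennreal (if u \<le> w then K else M * u powr (-e)) * indicator {0..L} u
        \<le> ennreal K * indicator {0..w} u + ennreal M * (ennreal (u powr (-e)) * indicator {w..} u)"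
      using assms by (auto split: split_indicator simp: add_increasing2 ennreal_mult''[symmetric])
  qed
  also have "\<dots> = ennreal K * emeasure lborel {0..w} + ennreal M * (\<integral>\<^sup>+u. ennreal (u powr (-e)) * indicator {w..} u \<partial>lborel)"
    by (subst nn_integral_add) (auto simp: nn_integral_cmult nn_integral_cmult_indicator)
  also have "\<dots> = ennreal (K*w + M * (w powr (1-e) / (e-1)))"
    using assms by (simp add: tail_int en_lin)
  finally show ?thesis .
qed

lemma LG0:
  fixes K M w L :: real
  assumes "0 \<le> K" "0 \<le> M" "0 < w"
  shows "(\<integral>\<^sup>+u\<in>{0..L}. ennreal (if u \<le> w then K else M * u powr (-1)) \<partial>lborel)
          \<le> ennreal (K*w + M * max 0 (ln L - ln w))"
proof (cases "w \<le> L")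
  case True
  have "(\<integral>\<^sup>+u\<in>{0..L}. ennreal (if u \<le> w then K else M * u powr (-1)) \<partial>lborel)
     \<le> (\<integral>\<^sup>+u. ennreal K * indicator {0..w} u + ennreal M * (ennreal (u powr (-1)) * indicator {w..L} u) \<partial>lborel)"
  proof (intro nn_integral_mono)
    fix u
    show "ennreal (if u \<le> w then K else M * u powr (-1)) * indicator {0..L} u
        \<le> ennreal K * indicator {0..w} u + ennreal M * (ennreal (u powr (-1)) * indicator {w..L} u)"
      using assms by (auto split: split_indicator simp: add_increasing2 ennreal_mult''[symmetric])
  qed
  also have "\<dots> = ennreal K * emeasure lborel {0..w} + ennreal M * (\<integral>\<^sup>+u. ennreal (u powr (-1)) * indicator {w..L} u \<partial>lborel)"
    by (subst nn_integral_add) (auto simp: nn_integral_cmult nn_integral_cmult_indicator)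
  also have "\<dots> = ennreal (K*w + M * (ln L - ln w))"
    using assms True by (subst fin_int) (auto simp add: en_lin)
  also have "\<dots> \<le> ennreal (K*w + M * max 0 (ln L - ln w))"
    using assms by (intro ennreal_leI add_left_mono mult_left_mono) auto
  finally show ?thesis .
next
  case False
  have "(\<integral>\<^sup>+u\<in>{0..L}. ennreal (if u \<le> w then K else M * u powr (-1)) \<partial>lborel)
     \<le> (\<integral>\<^sup>+u. ennreal K * indicator {0..w} u \<partial>lborel)"
    using False by (intro nn_integral_mono) (auto split: split_indicator)
  also have "\<dots> = ennreal (K*w)"
    using assms by (simp add: nn_integral_cmult_indicator ennreal_mult'')
  also have "\<dots> \<le> ennreal (K*w + M * max 0 (ln L - ln w))"
    using assms by (intro ennreal_leI) auto
  finally show ?thesis .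
qed


lemma lemA:
  fixes h g :: "real \<Rightarrow> ennreal" and c d :: real
  assumes cd: "c \<le> d" and g[measurable]: "g \<in> borel_measurable borel"
    and hg: "\<And>u. 0 < u \<Longrightarrow> h u \<le> g u"
  shows "(\<integral>\<^sup>+x\<in>{c..d}. (\<integral>\<^sup>+y\<in>{c..d}. h \<bar>x-y\<bar> \<partial>lborel) \<partial>lborel)
           \<le> ennreal (2*(d-c)) * (\<integral>\<^sup>+u\<in>{0..d-c}. g u \<partial>lborel)"
proof -
  define l where "l = d - c"
  have l0: "0 \<le> l" using cd unfolding l_def by simp
  define I where "I = (\<integral>\<^sup>+u\<in>{0..l}. g u \<partial>lborel)"
  have inner: "(\<integral>\<^sup>+y\<in>{c..d}. h \<bar>x-y\<bar> \<partial>lborel) \<le> 2 * I" if x: "x \<in> {c..d}" for x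
  proof -
    have "(\<integral>\<^sup>+y\<in>{c..d}. h \<bar>x-y\<bar> \<partial>lborel) \<le> (\<integral>\<^sup>+y. g \<bar>x-y\<bar> * indicator {x-l..x+l} y \<partial>lborel)"
    proof (rule nn_integral_mono_AE)
      show "AE y in lborel. h \<bar>x-y\<bar> * indicator {c..d} y \<le> g \<bar>x-y\<bar> * indicator {x-l..x+l} y"
        using AE_lborel_singleton[of x]
      proof eventually_elim
        case (elim y)
        then have "h \<bar>x-y\<bar> \<le> g \<bar>x-y\<bar>" by (intro hg) auto
        then show ?case using x unfolding l_def
          by (auto split: split_indicator)
      qed
    qed
    also have "\<dots> = (\<integral>\<^sup>+w. g \<bar>w\<bar> * indicator {-l..l} w \<partial>lborel)"
    proof -
      have "(\<integral>\<^sup>+y. g \<bar>x-y\<bar> * indicator {x-l..x+l} y \<partial>lborel)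
          = ennreal \<bar>1::real\<bar> * (\<integral>\<^sup>+w. g \<bar>x-(x + 1*w)\<bar> * indicator {x-l..x+l} (x + 1*w) \<partial>lborel)"
        by (rule nn_integral_real_affine) auto
      also have "\<dots> = (\<integral>\<^sup>+w. g \<bar>w\<bar> * indicator {-l..l} w \<partial>lborel)"
        by (simp, intro nn_integral_cong) (auto split: split_indicator)
      finally show ?thesis .
    qed
    also have "\<dots> \<le> (\<integral>\<^sup>+w. g w * indicator {0..l} w + g \<bar>w\<bar> * indicator {-l..0} w \<partial>lborel)"
      by (intro nn_integral_mono) (auto split: split_indicator)
    also have "\<dots> = I + (\<integral>\<^sup>+w. g \<bar>w\<bar> * indicator {-l..0} w \<partial>lborel)"
      unfolding I_def by (subst nn_integral_add) auto
    also have "(\<integral>\<^sup>+w. g \<bar>w\<bar> * indicator {-l..0} w \<partial>lborel) = I"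
    proof -
      have "(\<integral>\<^sup>+w. g \<bar>w\<bar> * indicator {-l..0} w \<partial>lborel)
          = ennreal \<bar>-1::real\<bar> * (\<integral>\<^sup>+w. g \<bar>0 + -1*w\<bar> * indicator {-l..0} (0 + -1*w) \<partial>lborel)"
        by (rule nn_integral_real_affine) auto
      also have "\<dots> = I"
        unfolding I_def by (simp, intro nn_integral_cong) (auto split: split_indicator)
      finally show ?thesis .
    qed
    finally show ?thesis by (simp add: mult_2)
  qed
  have "(\<integral>\<^sup>+x\<in>{c..d}. (\<integral>\<^sup>+y\<in>{c..d}. h \<bar>x-y\<bar> \<partial>lborel) \<partial>lborel)
      \<le> (\<integral>\<^sup>+x. (2 * I) * indicator {c..d} x \<partial>lborel)"
    using inner by (intro nn_integral_mono) (auto split: split_indicator)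
  also have "\<dots> = 2 * I * ennreal l"
    using cd unfolding l_def by (subst nn_integral_cmult_indicator) auto
  also have "\<dots> = ennreal (2*l) * I"
    using l0 by (simp add: ennreal_mult mult_ac)
  finally show ?thesis unfolding l_def I_def .
qed


definition Psi :: "real \<Rightarrow> real \<Rightarrow> real \<Rightarrow> nat \<Rightarrow> real \<Rightarrow> real \<Rightarrow> real" where
  "Psi \<alpha> \<beta> p n a v = (if v \<le> a powr (2/\<beta>)
     then (real n^n+1) * a powr (-2*p) * a powr (1/\<alpha>) + (a powr (1/\<alpha>)) powr (1-2*\<alpha>*p)/(2*\<alpha>*p-1)
     else (1 + 1/(2*\<alpha>*p-1)) * v powr (-(\<beta>*p - \<beta>/(2*\<alpha>))))"

lemma Fn_meas[measurable]: "(\<lambda>u. Fn \<alpha> \<beta> p a v u) \<in> borel_measurable borel"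
  unfolding Fn_def by measurable

lemma Psi_meas[measurable]: "(\<lambda>v. Psi \<alpha> \<beta> p n a v) \<in> borel_measurable borel"
  unfolding Psi_def by measurable

lemma XY:
  assumes "0<\<alpha>" "0<\<beta>" "0<p" "p \<le> real n" "1 < 2*\<alpha>*p" "0<a" "0<v"
  shows "(\<integral>\<^sup>+u\<in>{0..L}. ennreal (Fn \<alpha> \<beta> p a v u) \<partial>lborel) \<le> ennreal (Psi \<alpha> \<beta> p n a v)"
proof (cases "v \<le> a powr (2/\<beta>)")
  case True
  define r where "r = a powr (1/\<alpha>)"
  have r0: "r > 0" unfolding r_def using assms by simp
  define K1 where "K1 = (real n^n+1) * a powr (-2*p)"
  have K0: "K1 \<ge> 0" unfolding K1_def by simp
  have "(\<integral>\<^sup>+u\<in>{0..L}. ennreal (Fn \<alpha> \<beta> p a v u) \<partial>lborel)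
     \<le> (\<integral>\<^sup>+u\<in>{0..L}. ennreal (if u \<le> r then K1 else 1 * u powr (-(2*\<alpha>*p))) \<partial>lborel)"
  proof (intro nn_integral_mono)
    fix u
    show "ennreal (Fn \<alpha> \<beta> p a v u) * indicator {0..L} u
      \<le> ennreal (if u \<le> r then K1 else 1 * u powr (-(2*\<alpha>*p))) * indicator {0..L} u"
    proof (cases "u \<le> r")
      case True
      then show ?thesis unfolding K1_def using P1[OF assms(3,4,6)]
        by (auto split: split_indicator intro: ennreal_leI)
    next
      case False
      then have "u > 0" using r0 by simp
      then show ?thesis using False P2[OF assms(3) _ assms(1)]
        by (auto split: split_indicator intro: ennreal_leI)
    qed
  qed
  also have "\<dots> \<le> ennreal (K1*r + 1 * (r powr (1-2*\<alpha>*p) / (2*\<alpha>*p-1)))"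
    by (rule LG1) (use K0 r0 assms in auto)
  also have "\<dots> = ennreal (Psi \<alpha> \<beta> p n a v)"
    unfolding Psi_def K1_def r_def using True by simp
  finally show ?thesis .
next
  case False
  define w where "w = v powr (\<beta>/(2*\<alpha>))"
  have w0: "w > 0" unfolding w_def using assms by simp
  have "(\<integral>\<^sup>+u\<in>{0..L}. ennreal (Fn \<alpha> \<beta> p a v u) \<partial>lborel)
     \<le> (\<integral>\<^sup>+u\<in>{0..L}. ennreal (if u \<le> w then v powr (-(\<beta>*p)) else 1 * u powr (-(2*\<alpha>*p))) \<partial>lborel)"
  proof (intro nn_integral_mono)
    fix u
    show "ennreal (Fn \<alpha> \<beta> p a v u) * indicator {0..L} u
      \<le> ennreal (if u \<le> w then v powr (-(\<beta>*p)) else 1 * u powr (-(2*\<alpha>*p))) * indicator {0..L} u"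
    proof (cases "u \<le> w")
      case True
      then show ?thesis using P3[OF assms(3,7,2)]
        by (auto split: split_indicator intro: ennreal_leI)
    next
      case False
      then have "u > 0" using w0 by simp
      then show ?thesis using False P2[OF assms(3) _ assms(1)]
        by (auto split: split_indicator intro: ennreal_leI)
    qed
  qed
  also have "\<dots> \<le> ennreal (v powr (-(\<beta>*p)) * w + 1 * (w powr (1-2*\<alpha>*p) / (2*\<alpha>*p-1)))"
    by (rule LG1) (use w0 assms in auto)
  also have "v powr (-(\<beta>*p)) * w + 1 * (w powr (1-2*\<alpha>*p) / (2*\<alpha>*p-1))
      = Psi \<alpha> \<beta> p n a v"
  proof -
    have e1: "v powr (-(\<beta>*p)) * w = v powr (-(\<beta>*p - \<beta>/(2*\<alpha>)))"
      unfolding w_def by (simp add: powr_add[symmetric])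
    have e2: "w powr (1-2*\<alpha>*p) = v powr (-(\<beta>*p - \<beta>/(2*\<alpha>)))"
    proof -
      have "w powr (1-2*\<alpha>*p) = v powr ((\<beta>/(2*\<alpha>))*(1-2*\<alpha>*p))"
        unfolding w_def by (simp add: powr_powr)
      also have "(\<beta>/(2*\<alpha>))*(1-2*\<alpha>*p) = -(\<beta>*p - \<beta>/(2*\<alpha>))"
        using assms by (simp add: field_simps)
      finally show ?thesis .
    qed
    show ?thesis unfolding Psi_def e1 e2 using False assms by (simp add: field_simps)
  qed
  finally show ?thesis .
qed


lemma red4:
  fixes F :: "real \<Rightarrow> real \<Rightarrow> real" and G :: "real \<Rightarrow> real"
  assumes "t1 \<le> t2" "x1 \<le> x2"
    and Fm: "\<And>v. (\<lambda>u. F v u) \<in> borel_measurable borel"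
    and Gm[measurable]: "G \<in> borel_measurable borel"
    and FG: "\<And>v. 0 < v \<Longrightarrow> (\<integral>\<^sup>+u\<in>{0..x2-x1}. ennreal (F v u) \<partial>lborel) \<le> ennreal (G v)"
  shows "(\<integral>\<^sup>+t\<in>{t1..t2}. \<integral>\<^sup>+s\<in>{t1..t2}. \<integral>\<^sup>+x\<in>{x1..x2}. \<integral>\<^sup>+y\<in>{x1..x2}.
            ennreal (F \<bar>t-s\<bar> \<bar>x-y\<bar>) \<partial>lborel \<partial>lborel \<partial>lborel \<partial>lborel)
     \<le> ennreal (2*(t2-t1)) * (ennreal (2*(x2-x1)) * (\<integral>\<^sup>+v\<in>{0..t2-t1}. ennreal (G v) \<partial>lborel))"
proof -
  have "(\<integral>\<^sup>+t\<in>{t1..t2}. \<integral>\<^sup>+s\<in>{t1..t2}. (\<lambda>v. \<integral>\<^sup>+x\<in>{x1..x2}. \<integral>\<^sup>+y\<in>{x1..x2}.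
            ennreal (F v \<bar>x-y\<bar>) \<partial>lborel \<partial>lborel) \<bar>t-s\<bar> \<partial>lborel \<partial>lborel)
     \<le> ennreal (2*(t2-t1)) * (\<integral>\<^sup>+v\<in>{0..t2-t1}. ennreal (2*(x2-x1)) * ennreal (G v) \<partial>lborel)"
  proof (rule lemA)
    show "t1 \<le> t2" by fact
    show "(\<lambda>v. ennreal (2*(x2-x1)) * ennreal (G v)) \<in> borel_measurable borel" by measurable
    fix v :: real assume v: "0 < v"
    have m: "(\<lambda>u. ennreal (F v u)) \<in> borel_measurable borel" using Fm[of v] by measurable
    have "(\<integral>\<^sup>+x\<in>{x1..x2}. \<integral>\<^sup>+y\<in>{x1..x2}. (\<lambda>u. ennreal (F v u)) \<bar>x-y\<bar> \<partial>lborel \<partial>lborel)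
        \<le> ennreal (2*(x2-x1)) * (\<integral>\<^sup>+u\<in>{0..x2-x1}. ennreal (F v u) \<partial>lborel)"
      by (rule lemA[OF assms(2) m]) simp
    also have "\<dots> \<le> ennreal (2*(x2-x1)) * ennreal (G v)"
      by (intro mult_left_mono FG v) auto
    finally show "(\<lambda>v. \<integral>\<^sup>+x\<in>{x1..x2}. \<integral>\<^sup>+y\<in>{x1..x2}. ennreal (F v \<bar>x-y\<bar>) \<partial>lborel \<partial>lborel) v
        \<le> ennreal (2*(x2-x1)) * ennreal (G v)" by simp
  qed
  also have "(\<integral>\<^sup>+v\<in>{0..t2-t1}. ennreal (2*(x2-x1)) * ennreal (G v) \<partial>lborel)
     = ennreal (2*(x2-x1)) * (\<integral>\<^sup>+v\<in>{0..t2-t1}. ennreal (G v) \<partial>lborel)"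
    by (subst nn_integral_cmult[symmetric]) (auto simp: mult.assoc)
  finally show ?thesis by simp
qed


definition I4 :: "real \<Rightarrow> real \<Rightarrow> real \<Rightarrow> real \<Rightarrow> real \<Rightarrow> real \<Rightarrow> real \<Rightarrow> real \<Rightarrow> ennreal" where
  "I4 \<alpha> \<beta> p a t1 t2 x1 x2 = (\<integral>\<^sup>+t\<in>{t1..t2}. \<integral>\<^sup>+s\<in>{t1..t2}. \<integral>\<^sup>+x\<in>{x1..x2}. \<integral>\<^sup>+y\<in>{x1..x2}.
            ennreal (Fn \<alpha> \<beta> p a \<bar>t-s\<bar> \<bar>x-y\<bar>) \<partial>lborel \<partial>lborel \<partial>lborel \<partial>lborel)"

lemma en3: "0 \<le> A \<Longrightarrow> 0 \<le> B \<Longrightarrow> 0 \<le> X \<Longrightarrow> 0 \<le> Y \<Longrightarrow>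
   ennreal A * (ennreal B * (ennreal X * ennreal Y)) = ennreal (A * (B * (X * Y)))"
  by (simp add: ennreal_mult)

lemma case_neg:
  assumes "0<\<alpha>" "0<\<beta>" "0<p" "2*p < 1/\<alpha> + 2/\<beta>" "t1 \<le> t2" "x1 \<le> x2"
  shows "\<exists>C0. \<forall>a. I4 \<alpha> \<beta> p a t1 t2 x1 x2 \<le> ennreal C0"
proof -
  define e where "e = 2*\<alpha>*\<beta>*p/(2*\<alpha>+\<beta>)"
  define \<theta> where "\<theta> = \<beta>/(2*\<alpha>+\<beta>)"
  define L where "L = x2 - x1"
  define V where "V = t2 - t1"
  have L0: "L \<ge> 0" "V \<ge> 0" using assms unfolding L_def V_def by auto
  have e0: "0 \<le> e" unfolding e_def using assms by simp
  have e1: "e < 1"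
  proof -
    have "2*p*(\<alpha>*\<beta>) < (1/\<alpha> + 2/\<beta>)*(\<alpha>*\<beta>)"
      using assms by (intro mult_strict_right_mono) auto
    then have "2*\<alpha>*\<beta>*p < 2*\<alpha>+\<beta>" using assms by (simp add: field_simps)
    then show ?thesis unfolding e_def using assms by (simp add: field_simps)
  qed
  have th: "0 \<le> \<theta>" "\<theta> \<le> 1" unfolding \<theta>_def using assms by auto
  have ex1: "2*\<alpha>*\<theta>*p = e" "\<beta>*(1-\<theta>)*p = e"
    unfolding \<theta>_def e_def using assms by (simp_all add: field_simps)
  define G where "G = (\<lambda>v::real. L powr (1-e)/(1-e) * v powr (-e))"
  have "I4 \<alpha> \<beta> p a t1 t2 x1 x2 \<le> ennreal (2*(t2-t1)) * (ennreal (2*(x2-x1)) * (\<integral>\<^sup>+v\<in>{0..t2-t1}. ennreal (G v) \<partial>lborel))" for a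
    unfolding I4_def
  proof (rule red4[where F="Fn \<alpha> \<beta> p a" and G=G])
    show "t1 \<le> t2" "x1 \<le> x2" by fact+
    show "G \<in> borel_measurable borel" unfolding G_def by measurable
    show "\<And>v. (\<lambda>u. Fn \<alpha> \<beta> p a v u) \<in> borel_measurable borel" by measurable
    fix v :: real assume v: "0 < v"
    have "(\<integral>\<^sup>+u\<in>{0..x2-x1}. ennreal (Fn \<alpha> \<beta> p a v u) \<partial>lborel)
        \<le> (\<integral>\<^sup>+u. ennreal (v powr (-e)) * (ennreal (u powr (-e)) * indicator {0..L} u) \<partial>lborel)"
    proof (rule nn_integral_mono_AE)
      show "AE u in lborel. ennreal (Fn \<alpha> \<beta> p a v u) * indicator {0..x2-x1} u
          \<le> ennreal (v powr (-e)) * (ennreal (u powr (-e)) * indicator {0..L} u)"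
        using AE_lborel_singleton[of 0]
      proof eventually_elim
        case (elim u)
        show ?case
        proof (cases "u \<in> {0..L}")
          case True
          then have u: "u > 0" using elim by auto
          have "Fn \<alpha> \<beta> p a v u \<le> u powr (-(2*\<alpha>*\<theta>*p)) * v powr (-(\<beta>*(1-\<theta>)*p))"
            by (rule P4) (use assms u v th in auto)
          then have "Fn \<alpha> \<beta> p a v u \<le> v powr (-e) * u powr (-e)" unfolding ex1 by (simp add: mult.commute)
          then have "ennreal (Fn \<alpha> \<beta> p a v u) \<le> ennreal (v powr (-e) * u powr (-e))"
            by (rule ennreal_leI)
          also have "\<dots> = ennreal (v powr (-e)) * ennreal (u powr (-e))"
            by (rule ennreal_mult'') simp
          finally show ?thesis using True unfolding L_def by simp
        next
          case False
          then show ?thesis unfolding L_def by simp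
        qed
      qed
    qed
    also have "\<dots> = ennreal (v powr (-e)) * ennreal (L powr (1-e)/(1-e))"
      using pow0_int[OF e0 e1 L0(1)] by (subst nn_integral_cmult) auto
    also have "\<dots> = ennreal (v powr (-e) * (L powr (1-e)/(1-e)))"
      using e1 by (subst ennreal_mult'') auto
    also have "\<dots> = ennreal (G v)" unfolding G_def by (simp add: mult.commute)
    finally show "(\<integral>\<^sup>+u\<in>{0..x2-x1}. ennreal (Fn \<alpha> \<beta> p a v u) \<partial>lborel) \<le> ennreal (G v)" .
  qed
  moreover have "(\<integral>\<^sup>+v\<in>{0..t2-t1}. ennreal (G v) \<partial>lborel) = ennreal (L powr (1-e)/(1-e)) * ennreal (V powr (1-e)/(1-e))"
  proof -
    have "(\<integral>\<^sup>+v\<in>{0..t2-t1}. ennreal (G v) \<partial>lborel) = (\<integral>\<^sup>+v. ennreal (L powr (1-e)/(1-e)) * (ennreal (v powr (-e)) * indicator {0..V} v) \<partial>lborel)"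
      unfolding G_def V_def by (intro nn_integral_cong, subst ennreal_mult') (use e1 in \<open>auto simp: mult.assoc\<close>)
    also have "\<dots> = ennreal (L powr (1-e)/(1-e)) * ennreal (V powr (1-e)/(1-e))"
      using pow0_int[OF e0 e1 L0(2)] by (subst nn_integral_cmult) auto
    finally show ?thesis .
  qed
  ultimately have b: "I4 \<alpha> \<beta> p a t1 t2 x1 x2 \<le> ennreal (2*V) * (ennreal (2*L) * (ennreal (L powr (1-e)/(1-e)) * ennreal (V powr (1-e)/(1-e))))" for a
    unfolding L_def V_def by simp
  have bnd: "I4 \<alpha> \<beta> p a t1 t2 x1 x2 \<le> ennreal (2*V * (2*L * (L powr (1-e)/(1-e) * (V powr (1-e)/(1-e)))))" for a
  proof -
    note b[of a]
    also have "ennreal (2*V) * (ennreal (2*L) * (ennreal (L powr (1-e)/(1-e)) * ennreal (V powr (1-e)/(1-e))))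
     = ennreal (2*V * (2*L * (L powr (1-e)/(1-e) * (V powr (1-e)/(1-e)))))"
      by (rule en3) (use L0 e1 in auto)
    finally show ?thesis .
  qed
  have "\<forall>a. I4 \<alpha> \<beta> p a t1 t2 x1 x2 \<le> ennreal (2*V * (2*L * (L powr (1-e)/(1-e) * (V powr (1-e)/(1-e)))))"
    by (intro allI bnd)
  then show ?thesis by (rule exI)
qed


lemma red_pos:
  assumes "0<\<alpha>" "0<\<beta>" "0<p" "p \<le> real n" "1 < 2*\<alpha>*p" "0<a" "t1 \<le> t2" "x1 \<le> x2"
  shows "I4 \<alpha> \<beta> p a t1 t2 x1 x2 \<le> ennreal (2*(t2-t1)) * (ennreal (2*(x2-x1)) *
           (\<integral>\<^sup>+v\<in>{0..t2-t1}. ennreal (Psi \<alpha> \<beta> p n a v) \<partial>lborel))"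
  unfolding I4_def
proof (rule red4[where F="Fn \<alpha> \<beta> p a" and G="Psi \<alpha> \<beta> p n a"])
  show "t1 \<le> t2" "x1 \<le> x2" by fact+
  show "Psi \<alpha> \<beta> p n a \<in> borel_measurable borel" by measurable
  show "\<And>v. (\<lambda>u. Fn \<alpha> \<beta> p a v u) \<in> borel_measurable borel" by measurable
  fix v :: real assume "0 < v"
  then show "(\<integral>\<^sup>+u\<in>{0..x2-x1}. ennreal (Fn \<alpha> \<beta> p a v u) \<partial>lborel) \<le> ennreal (Psi \<alpha> \<beta> p n a v)"
    by (intro XY) (use assms in auto)
qed

lemma en2: "0 \<le> A \<Longrightarrow> 0 \<le> B \<Longrightarrow> 0 \<le> X \<Longrightarrow>
   ennreal A * (ennreal B * ennreal X) = ennreal (A * (B * X))"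
  by (simp add: ennreal_mult)

lemma case_pos:
  assumes "0<\<alpha>" "0<\<beta>" "0<p" "p \<le> real n" "1/\<alpha> + 2/\<beta> < 2*p" "t1 \<le> t2" "x1 \<le> x2"
  shows "\<exists>Cst. \<forall>a>0. I4 \<alpha> \<beta> p a t1 t2 x1 x2 \<le> ennreal (Cst * a powr (-(2*p - (1/\<alpha> + 2/\<beta>))))"
proof -
  define e where "e = 2*\<alpha>*p"
  define q where "q = \<beta>*p - \<beta>/(2*\<alpha>)"
  define \<gamma> where "\<gamma> = 2*p - (1/\<alpha> + 2/\<beta>)"
  have g0: "\<gamma> > 0" unfolding \<gamma>_def using assms by simp
  have e1: "e > 1"
  proof -
    have "(1/\<alpha> + 2/\<beta>) * \<alpha> < 2*p*\<alpha>" using assms by (intro mult_strict_right_mono) auto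
    then have "1 + 2*\<alpha>/\<beta> < e" unfolding e_def using assms by (simp add: field_simps)
    moreover have "2*\<alpha>/\<beta> > 0" using assms by simp
    ultimately show ?thesis by linarith
  qed
  have q1: "q - 1 = \<beta>*\<gamma>/2" unfolding q_def \<gamma>_def using assms by (simp add: field_simps)
  then have q1': "q > 1" using g0 assms by (smt (verit) divide_pos_pos mult_pos_pos)
  define L where "L = x2 - x1"
  define V where "V = t2 - t1"
  have L0: "L \<ge> 0" "V \<ge> 0" using assms unfolding L_def V_def by auto
  define Cp where "Cp = real n ^ n + 1"
  have Cp0: "Cp > 0" unfolding Cp_def by (simp add: add_nonneg_pos)
  define Mq where "Mq = 1 + 1/(e-1)"
  have Mq0: "Mq > 0" unfolding Mq_def using e1 by (simp add: add_pos_pos)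
  define Cst where "Cst = Cp + 1/(e-1) + Mq/(q-1)"
  have Cst0: "Cst \<ge> 0" unfolding Cst_def using Cp0 Mq0 e1 q1' by simp
  have bnd: "I4 \<alpha> \<beta> p a t1 t2 x1 x2 \<le> ennreal (2*V*(2*L*Cst) * a powr (-\<gamma>))" if a: "a > 0" for a
  proof -
    define sv where "sv = a powr (2/\<beta>)"
    have sv0: "sv > 0" unfolding sv_def using a by simp
    define Aa where "Aa = Cp * a powr (-2*p) * a powr (1/\<alpha>) + (a powr (1/\<alpha>)) powr (1-e)/(e-1)"
    have Aa0: "Aa \<ge> 0" unfolding Aa_def using Cp0 e1 by simp
    have Psi_eq: "Psi \<alpha> \<beta> p n a v = (if v \<le> sv then Aa else Mq * v powr (-q))" for v
      unfolding Psi_def sv_def Aa_def Mq_def q_def e_def Cp_def by simp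
    have "I4 \<alpha> \<beta> p a t1 t2 x1 x2 \<le> ennreal (2*V) * (ennreal (2*L) *
           (\<integral>\<^sup>+v\<in>{0..V}. ennreal (if v \<le> sv then Aa else Mq * v powr (-q)) \<partial>lborel))"
      using red_pos[OF assms(1-4) _ a assms(6,7)] e1 unfolding Psi_eq L_def V_def e_def by simp
    also have "(\<integral>\<^sup>+v\<in>{0..V}. ennreal (if v \<le> sv then Aa else Mq * v powr (-q)) \<partial>lborel)
        \<le> ennreal (Aa * sv + Mq * (sv powr (1-q) / (q-1)))"
      by (rule LG1) (use Aa0 Mq0 sv0 q1' in auto)
    also have "Aa * sv + Mq * (sv powr (1-q) / (q-1)) = Cst * a powr (-\<gamma>)"
    proof -
      have f1: "a powr (-2*p) * a powr (1/\<alpha>) * a powr (2/\<beta>) = a powr (-\<gamma>)"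
      proof -
        have "a powr (-2*p) * a powr (1/\<alpha>) * a powr (2/\<beta>) = a powr (-2*p + 1/\<alpha> + 2/\<beta>)"
          by (simp only: powr_add)
        also have "-2*p + 1/\<alpha> + 2/\<beta> = -\<gamma>" unfolding \<gamma>_def by simp
        finally show ?thesis .
      qed
      have f2: "(a powr (1/\<alpha>)) powr (1-e) * a powr (2/\<beta>) = a powr (-\<gamma>)"
      proof -
        have "(a powr (1/\<alpha>)) powr (1-e) * a powr (2/\<beta>) = a powr ((1/\<alpha>)*(1-e) + 2/\<beta>)"
          by (simp only: powr_powr powr_add)
        also have "(1/\<alpha>)*(1-e) + 2/\<beta> = -\<gamma>" unfolding e_def \<gamma>_def using assms by (simp add: field_simps)
        finally show ?thesis .
      qed
      have f3: "sv powr (1-q) = a powr (-\<gamma>)"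
      proof -
        have "sv powr (1-q) = a powr ((2/\<beta>)*(1-q))" unfolding sv_def by (simp add: powr_powr)
        also have "(2/\<beta>)*(1-q) = -\<gamma>" using q1 assms by (simp add: field_simps)
        finally show ?thesis .
      qed
      have "Aa * sv = Cp * (a powr (-2*p) * a powr (1/\<alpha>) * a powr (2/\<beta>)) + ((a powr (1/\<alpha>)) powr (1-e) * a powr (2/\<beta>))/(e-1)"
        unfolding Aa_def sv_def by (simp add: algebra_simps add_divide_distrib)
      also have "\<dots> = Cp * a powr (-\<gamma>) + a powr (-\<gamma>)/(e-1)" unfolding f1 f2 ..
      finally have "Aa * sv = Cp * a powr (-\<gamma>) + a powr (-\<gamma>)/(e-1)" .
      then show ?thesis unfolding f3 Cst_def by (simp add: algebra_simps add_divide_distrib)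
    qed
    finally have "I4 \<alpha> \<beta> p a t1 t2 x1 x2 \<le> ennreal (2*V) * (ennreal (2*L) * ennreal (Cst * a powr (-\<gamma>)))"
      by (simp add: mult_left_mono)
    also have "\<dots> = ennreal (2*V*(2*L*(Cst * a powr (-\<gamma>))))"
      by (subst en2) (use L0 Cst0 in auto)
    finally show ?thesis by (simp add: mult.assoc)
  qed
  show ?thesis unfolding \<gamma>_def[symmetric]
    by (rule exI[where x="2*V*(2*L*Cst)"]) (use bnd in auto)
qed


lemma case_zero:
  assumes "0<\<alpha>" "0<\<beta>" "0<p" "p \<le> real n" "2*p = 1/\<alpha> + 2/\<beta>" "t1 \<le> t2" "x1 \<le> x2"
  shows "\<exists>K0 K1. 0 \<le> K0 \<and> 0 \<le> K1 \<and> (\<forall>a>0. I4 \<alpha> \<beta> p a t1 t2 x1 x2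
            \<le> ennreal (K0 + K1 * max 0 (ln (t2-t1) - (2/\<beta>) * ln a)))"
proof -
  define e where "e = 2*\<alpha>*p"
  have e1: "e > 1"
  proof -
    have "(1/\<alpha> + 2/\<beta>) * \<alpha> = 2*p*\<alpha>" using assms by simp
    then have "1 + 2*\<alpha>/\<beta> = e" unfolding e_def using assms by (simp add: field_simps)
    moreover have "2*\<alpha>/\<beta> > 0" using assms by simp
    ultimately show ?thesis by linarith
  qed
  have hq: "\<beta>*p - \<beta>/(2*\<alpha>) = 1" using assms by (simp add: field_simps)
  define L where "L = x2 - x1"
  define V where "V = t2 - t1"
  have L0: "L \<ge> 0" "V \<ge> 0" using assms unfolding L_def V_def by auto
  define Cp where "Cp = real n ^ n + 1"
  have Cp0: "Cp > 0" unfolding Cp_def by (simp add: add_nonneg_pos)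
  define Mq where "Mq = 1 + 1/(e-1)"
  have Mq0: "Mq > 0" unfolding Mq_def using e1 by (simp add: add_pos_pos)
  define Cst where "Cst = Cp + 1/(e-1)"
  have Cst0: "Cst \<ge> 0" unfolding Cst_def using Cp0 e1 by simp
  have bnd: "I4 \<alpha> \<beta> p a t1 t2 x1 x2 \<le> ennreal (2*V*(2*L*Cst) + 2*V*(2*L*Mq) * max 0 (ln V - (2/\<beta>) * ln a))"
    if a: "a > 0" for a
  proof -
    define sv where "sv = a powr (2/\<beta>)"
    have sv0: "sv > 0" unfolding sv_def using a by simp
    define Aa where "Aa = Cp * a powr (-2*p) * a powr (1/\<alpha>) + (a powr (1/\<alpha>)) powr (1-e)/(e-1)"
    have Aa0: "Aa \<ge> 0" unfolding Aa_def using Cp0 e1 by simp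
    have Psi_eq: "Psi \<alpha> \<beta> p n a v = (if v \<le> sv then Aa else Mq * v powr (-1))" for v
      unfolding Psi_def hq sv_def Aa_def Mq_def e_def Cp_def by simp
    have "I4 \<alpha> \<beta> p a t1 t2 x1 x2 \<le> ennreal (2*V) * (ennreal (2*L) *
           (\<integral>\<^sup>+v\<in>{0..V}. ennreal (if v \<le> sv then Aa else Mq * v powr (-1)) \<partial>lborel))"
      using red_pos[OF assms(1-4) _ a assms(6,7)] e1 unfolding Psi_eq L_def V_def e_def by simp
    also have "(\<integral>\<^sup>+v\<in>{0..V}. ennreal (if v \<le> sv then Aa else Mq * v powr (-1)) \<partial>lborel)
        \<le> ennreal (Aa * sv + Mq * max 0 (ln V - ln sv))"
      by (rule LG0) (use Aa0 Mq0 sv0 in auto)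
    also have "Aa * sv + Mq * max 0 (ln V - ln sv) = Cst + Mq * max 0 (ln V - (2/\<beta>) * ln a)"
    proof -
      have f1: "a powr (-2*p) * a powr (1/\<alpha>) * a powr (2/\<beta>) = 1"
      proof -
        have "a powr (-2*p) * a powr (1/\<alpha>) * a powr (2/\<beta>) = a powr (-2*p + 1/\<alpha> + 2/\<beta>)"
          by (simp only: powr_add)
        also have "-2*p + 1/\<alpha> + 2/\<beta> = 0" using assms by simp
        finally show ?thesis using a by simp
      qed
      have f2: "(a powr (1/\<alpha>)) powr (1-e) * a powr (2/\<beta>) = 1"
      proof -
        have "(a powr (1/\<alpha>)) powr (1-e) * a powr (2/\<beta>) = a powr ((1/\<alpha>)*(1-e) + 2/\<beta>)"
          by (simp only: powr_powr powr_add)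
        also have "(1/\<alpha>)*(1-e) + 2/\<beta> = 0" unfolding e_def using assms by (simp add: field_simps)
        finally show ?thesis using a by simp
      qed
      have "Aa * sv = Cp * (a powr (-2*p) * a powr (1/\<alpha>) * a powr (2/\<beta>)) + ((a powr (1/\<alpha>)) powr (1-e) * a powr (2/\<beta>))/(e-1)"
        unfolding Aa_def sv_def by (simp add: algebra_simps add_divide_distrib)
      also have "\<dots> = Cst" unfolding f1 f2 Cst_def by simp
      finally have "Aa * sv = Cst" .
      moreover have "ln sv = (2/\<beta>) * ln a" unfolding sv_def by simp
      ultimately show ?thesis by simp
    qed
    finally have "I4 \<alpha> \<beta> p a t1 t2 x1 x2 \<le> ennreal (2*V) * (ennreal (2*L) * ennreal (Cst + Mq * max 0 (ln V - (2/\<beta>) * ln a)))"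
      by (simp add: mult_left_mono)
    also have "\<dots> = ennreal (2*V*(2*L*(Cst + Mq * max 0 (ln V - (2/\<beta>) * ln a))))"
      by (subst en2) (use L0 Cst0 Mq0 in auto)
    also have "2*V*(2*L*(Cst + Mq * max 0 (ln V - (2/\<beta>) * ln a)))
      = 2*V*(2*L*Cst) + 2*V*(2*L*Mq) * max 0 (ln V - (2/\<beta>) * ln a)"
      by (simp add: algebra_simps)
    finally show ?thesis .
  qed
  show ?thesis
    by (rule exI[where x="2*V*(2*L*Cst)"], rule exI[where x="2*V*(2*L*Mq)"])
       (use bnd L0 Cst0 Mq0 in \<open>auto simp: V_def\<close>)
qed


theorem lemma4p1:
  fixes H \<alpha> T t1 t2 x1 x2 :: real and d :: nat
  assumes "0 < H" "H < 1" "0 < \<alpha>" "\<alpha> \<le> 1" "1 \<le> d" "0 < T"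
    and "0 < t1" "t1 < t2" "t2 \<le> T"
    and "0 \<le> x1" "x1 < x2" "x2 < 2 * pi"
  shows "\<forall>N>0. \<exists>M. \<forall>N0\<ge>M. \<exists>C::real. C > 0 \<and> (\<forall>a\<in>{0..N}.
    (\<integral>\<^sup>+ t\<in>{t1..t2}. \<integral>\<^sup>+ s\<in>{t1..t2}. \<integral>\<^sup>+ x\<in>{x1..x2}. \<integral>\<^sup>+ y\<in>{x1..x2}.
        ennreal (exp (- (a\<^sup>2) / Delta H \<alpha> t x s y) / Delta H \<alpha> t x s y powr (real d / 2))
      \<partial>lborel \<partial>lborel \<partial>lborel \<partial>lborel)
    \<le> ennreal C * Kker N0 (real d - (1 / \<alpha> + 2 / min \<alpha> (2 * H))) a)"
proof -
  define \<beta> where "\<beta> = min \<alpha> (2*H)"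
  define p where "p = real d / 2"
  have b0: "0 < \<beta>" using assms unfolding \<beta>_def by simp
  have p0: "0 < p" using assms unfolding p_def by simp
  have pn: "p \<le> real d" unfolding p_def by simp
  have t12: "t1 \<le> t2" "x1 \<le> x2" using assms by auto
  have eqI: "\<And>a t x s y. exp (- (a\<^sup>2) / Delta H \<alpha> t x s y) / Delta H \<alpha> t x s y powr (real d / 2)
      = Fn \<alpha> \<beta> p a \<bar>t-s\<bar> \<bar>x-y\<bar>"
    by (simp add: Fn_def Delta_def \<beta>_def p_def)
  define \<gamma> where "\<gamma> = real d - (1 / \<alpha> + 2 / min \<alpha> (2 * H))"
  have g': "\<gamma> = 2*p - (1/\<alpha> + 2/\<beta>)" unfolding \<gamma>_def p_def \<beta>_def by simp
  have main: "\<exists>M. \<forall>N0\<ge>M. \<exists>C::real. C > 0 \<and> (\<forall>a\<in>{0..N}. I4 \<alpha> \<beta> p a t1 t2 x1 x2 \<le> ennreal C * Kker N0 \<gamma> a)"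
    if N: "N > 0" for N
  proof (cases "\<gamma> < 0")
    case True
    then have "2*p < 1/\<alpha> + 2/\<beta>" using g' by simp
    from case_neg[OF assms(3) b0 p0 this t12] obtain C0 where C0: "\<And>a. I4 \<alpha> \<beta> p a t1 t2 x1 x2 \<le> ennreal C0"
      by blast
    have "I4 \<alpha> \<beta> p a t1 t2 x1 x2 \<le> ennreal (max C0 1) * Kker N0 \<gamma> a" for a N0
    proof -
      have "Kker N0 \<gamma> a = 1" using True unfolding Kker_def by simp
      then show ?thesis using C0[of a] by (simp add: order_trans[OF _ ennreal_leI])
    qed
    then show ?thesis by (intro exI[of _ 0] allI impI exI[of _ "max C0 1"]) auto
  next
    case False
    then consider "\<gamma> > 0" | "\<gamma> = 0" by linarith
    then show ?thesis
    proof cases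
      case 1
      then have "1/\<alpha> + 2/\<beta> < 2*p" using g' by simp
      from case_pos[OF assms(3) b0 p0 pn this t12] obtain Cst
        where Cst: "\<And>a. a > 0 \<Longrightarrow> I4 \<alpha> \<beta> p a t1 t2 x1 x2 \<le> ennreal (Cst * a powr (-\<gamma>))"
        unfolding g' by blast
      have "I4 \<alpha> \<beta> p a t1 t2 x1 x2 \<le> ennreal (max Cst 1) * Kker N0 \<gamma> a" if a: "a \<ge> 0" for a N0
      proof (cases "a = 0")
        case True
        then show ?thesis using 1 unfolding Kker_def by simp
      next
        case False
        then have ap: "a > 0" using a by simp
        have "I4 \<alpha> \<beta> p a t1 t2 x1 x2 \<le> ennreal (Cst * a powr (-\<gamma>))" by (rule Cst[OF ap])
        also have "\<dots> \<le> ennreal (max Cst 1 * a powr (-\<gamma>))"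
          by (intro ennreal_leI mult_right_mono) auto
        also have "\<dots> = ennreal (max Cst 1) * Kker N0 \<gamma> a"
          using 1 False unfolding Kker_def by (simp add: ennreal_mult)
        finally show ?thesis .
      qed
      then show ?thesis by (intro exI[of _ 0] allI impI exI[of _ "max Cst 1"]) auto
    next
      case 2
      then have "2*p = 1/\<alpha> + 2/\<beta>" using g' by simp
      from case_zero[OF assms(3) b0 p0 pn this t12] obtain K0 K1
        where K: "0 \<le> K0" "0 \<le> K1"
          and KB: "\<And>a. a > 0 \<Longrightarrow> I4 \<alpha> \<beta> p a t1 t2 x1 x2 \<le> ennreal (K0 + K1 * max 0 (ln (t2-t1) - (2/\<beta>) * ln a))"
        by blast
      show ?thesis
      proof (rule exI[of _ "N+1"], intro allI impI)
        fix N0 :: real assume N0: "N0 \<ge> N + 1"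
        define l0 where "l0 = ln (N0 / N)"
        have l0p: "l0 > 0" unfolding l0_def using N N0 by simp
        define B where "B = \<bar>ln (t2-t1)\<bar> + (2/\<beta>) * \<bar>ln N0\<bar>"
        have B0: "B \<ge> 0" unfolding B_def using b0 by simp
        define C where "C = (K0 + K1*B)/l0 + K1*(2/\<beta>) + 1"
        have C0: "C > 0" unfolding C_def using K B0 l0p b0 by (simp add: add_nonneg_pos)
        have "I4 \<alpha> \<beta> p a t1 t2 x1 x2 \<le> ennreal C * Kker N0 \<gamma> a" if a: "a \<in> {0..N}" for a
        proof (cases "a = 0")
          case True
          then show ?thesis using 2 C0 unfolding Kker_def by simp
        next
          case False
          then have ap: "a > 0" using a by simp
          define l where "l = ln (N0 / a)"
          have N0p: "N0 > 0" using N N0 by simp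
          have ll0: "l0 \<le> l" unfolding l_def l0_def using ap a N N0p
            by (intro ln_mono) (auto intro!: divide_left_mono)
          have lna: "ln a = ln N0 - l" unfolding l_def using ap N0p by (simp add: ln_div)
          have "max 0 (ln (t2-t1) - (2/\<beta>) * ln a) \<le> B + (2/\<beta>) * l"
          proof -
            have "ln (t2-t1) - (2/\<beta>) * ln a = ln (t2-t1) - (2/\<beta>) * ln N0 + (2/\<beta>) * l"
              unfolding lna using b0 by (simp add: field_simps)
            also have "\<dots> \<le> B + (2/\<beta>) * l"
            proof -
              have h1: "ln (t2-t1) \<le> \<bar>ln (t2-t1)\<bar>" by simp
              have h2: "(2/\<beta>) * (- ln N0) \<le> (2/\<beta>) * \<bar>ln N0\<bar>" using b0 by (intro mult_left_mono) auto
              show ?thesis unfolding B_def using h1 h2 by linarith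
            qed
            finally show ?thesis using B0 b0 l0p ll0 by (simp add: add_nonneg_nonneg)
          qed
          then have "K0 + K1 * max 0 (ln (t2-t1) - (2/\<beta>) * ln a) \<le> K0 + K1 * (B + (2/\<beta>) * l)"
            using K by (intro add_left_mono mult_left_mono) auto
          also have "\<dots> = (K0 + K1*B) + K1*(2/\<beta>)*l" by (simp add: algebra_simps)
          also have "\<dots> \<le> (K0 + K1*B)/l0 * l + K1*(2/\<beta>)*l"
          proof -
            have "(K0 + K1*B) * 1 \<le> (K0 + K1*B) * (l/l0)"
              using K B0 l0p ll0 by (intro mult_left_mono) auto
            then show ?thesis by simp
          qed
          also have "\<dots> \<le> C * l" unfolding C_def using l0p ll0 by (simp add: algebra_simps)
          finally have "K0 + K1 * max 0 (ln (t2-t1) - (2/\<beta>) * ln a) \<le> C * l" .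
          then have "I4 \<alpha> \<beta> p a t1 t2 x1 x2 \<le> ennreal (C * l)"
            using KB[OF ap] by (meson ennreal_leI order_trans)
          also have "\<dots> = ennreal C * Kker N0 \<gamma> a"
          proof -
            have "0 \<le> l" using l0p ll0 by simp
            then show ?thesis using 2 False C0 unfolding Kker_def l_def by (simp add: ennreal_mult)
          qed
          finally show ?thesis .
        qed
        then show "\<exists>C. C > 0 \<and> (\<forall>a\<in>{0..N}. I4 \<alpha> \<beta> p a t1 t2 x1 x2 \<le> ennreal C * Kker N0 \<gamma> a)"
          using C0 by blast
      qed
    qed
  qed
  show ?thesis
    unfolding eqI \<gamma>_def[symmetric] I4_def[symmetric] using main by blast
qed


end
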